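(* Fix an integer $d\ge 2$. For any $n^*,m^*<\infty$ and $\varepsilon>0$ there exist constants $r_1>0$ and $C>0$ such that every pair of integers $n\ge d$, $m\ge2$ with $\sigma_{n,m}^2\ge r_1$ satisfies: (a) $n>n^*$ and $m>m^*$; (b) $n/m\le (1+\varepsilon)\log m$; (c) $\mu_{n,m}\le C\sigma_{n,m}^2$.
   Context: Uniform multinomial occupancy model: $n$ balls distributed independently and uniformly over $m$ urns; $Y_n$ is the number of urns with exactly $d$ balls; $\mu_{n,m}=EY_n=m\binom{n}{d}m^{-d}(1-1/m)^{n-d}$ and $\sigma_{n,m}^2=\mathrm{Var}(Y_n)=\mu_{n,m}+m(m-1)\frac{n!}{d!d!(n-2d)!}m^{-2d}(1-2/m)^{n-2d}-\mu_{n,m}^2$, with the middle term $0$ when $n<2d$. *)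

theory Defs
  imports "HOL-Analysis.Analysis"
begin

text \<open>Mean of the number of urns with exactly d balls, n balls, m urns.\<close>
definition occ_mean :: "nat \<Rightarrow> nat \<Rightarrow> nat \<Rightarrow> real" where
  "occ_mean d n m = real m * real (n choose d) * (real m) powi (- int d)
      * (1 - 1 / real m) ^ (n - d)"

definition occ_var :: "nat \<Rightarrow> nat \<Rightarrow> nat \<Rightarrow> real" where
  "occ_var d n m = occ_mean d n m
     + (if n < 2 * d then 0 else
          real m * (real m - 1) * (fact n / (fact d * fact d * fact (n - 2 * d)))
          * (real m) powi (- 2 * int d) * (1 - 2 / real m) ^ (n - 2 * d))
     - (occ_mean d n m)^2"

end

theory Submission
  imports Defs
begin


lemma exp_ge_sum_pow:
  fixes x :: real assumes "x \<ge> 0"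
  shows "(\<Sum>n<N. x^n / fact n) \<le> exp x"
proof -
  have s: "summable (\<lambda>n. x^n /\<^sub>R fact n)" using exp_converges sums_summable by blast
  have "(\<Sum>n<N. x^n /\<^sub>R fact n) \<le> suminf (\<lambda>n. x^n /\<^sub>R fact n)"
    by (rule sum_le_suminf[OF s]) (use assms in auto)
  also have "\<dots> = exp x" using exp_converges sums_unique by metis
  finally show ?thesis by (simp add: divide_inverse mult.commute)
qed

lemma exp_ge_pow_fact:
  fixes x :: real assumes "x \<ge> 0"
  shows "x^k / fact k \<le> exp x"
proof -
  have s: "summable (\<lambda>n. x^n /\<^sub>R fact n)" using exp_converges sums_summable by blast
  have "(\<Sum>n\<in>{k}. x^n /\<^sub>R fact n) \<le> suminf (\<lambda>n. x^n /\<^sub>R fact n)"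
    by (rule sum_le_suminf[OF s]) (use assms in auto)
  also have "\<dots> = exp x" using exp_converges sums_unique by metis
  finally show ?thesis by (simp add: divide_inverse mult.commute)
qed

lemma pow_exp_le_fact:
  fixes x :: real assumes "x \<ge> 0"
  shows "x^k * exp (-x) \<le> fact k"
proof -
  have "x^k / fact k \<le> exp x" by (rule exp_ge_pow_fact[OF assms])
  hence "x^k \<le> fact k * exp x" by (simp add: divide_le_eq mult.commute)
  hence "x^k * exp(-x) \<le> fact k * exp x * exp (-x)" by (simp add: mult_right_mono)
  also have "\<dots> = fact k" by (simp add: exp_minus)
  finally show ?thesis .
qed

lemma e_bounds: "exp (5/2::real) \<ge> 12" "exp (2::real) \<ge> 7"
proof -
  have "(\<Sum>n<8. (5/2::real)^n / fact n) \<le> exp (5/2)" by (rule exp_ge_sum_pow) simp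
  moreover have "(\<Sum>n<8. (5/2::real)^n / fact n) \<ge> 12"
    by (simp add: lessThan_nat_numeral fact_numeral power_divide)
  ultimately show "exp (5/2::real) \<ge> 12" by linarith
  have "(\<Sum>n<6. (2::real)^n / fact n) \<le> exp 2" by (rule exp_ge_sum_pow) simp
  moreover have "(\<Sum>n<6. (2::real)^n / fact n) \<ge> 7"
    by (simp add: lessThan_nat_numeral fact_numeral power_divide)
  ultimately show "exp (2::real) \<ge> 7" by linarith
qed



lemma pd_le: assumes "d \<ge> 2" shows "real d ^ d * exp(-real d) \<le> 2*exp(-2)*fact d"
  using assms
proof (induction d rule: nat_induct_at_least)
  case base
  then show ?case by (simp add: fact_numeral)
next
  case (Suc d)
  have dpos: "real d > 0" using Suc by simp
  have b: "(1 + 1/real d)^d \<le> exp 1"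
  proof -
    have "(1 + 1/real d)^d \<le> exp(1/real d)^d"
      by (rule power_mono) (use exp_ge_add_one_self[of "1/real d"] dpos in auto)
    also have "\<dots> = exp 1" using dpos by (simp add: exp_of_nat_mult[symmetric])
    finally show ?thesis .
  qed
  have eq: "real (Suc d) ^ Suc d = (real d + 1) * real d ^ d * (1 + 1/real d)^d"
  proof -
    have "(real d + 1) = real d * (1 + 1/real d)" using dpos by (simp add: field_simps)
    hence "(real d + 1)^d = real d ^ d * (1 + 1/real d)^d" by (simp add: power_mult_distrib)
    moreover have "real (Suc d) ^ Suc d = (real d + 1) * (real d + 1)^d" by (simp add: add.commute)
    ultimately show ?thesis by (simp only: mult.assoc)
  qed
  have "real (Suc d) ^ Suc d * exp(-real (Suc d)) = (real d + 1) * (real d ^ d * exp(-real d)) * ((1 + 1/real d)^d * exp (-1))"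
  proof -
    have "exp(-real (Suc d)) = exp(-real d) * exp(-1)" by (simp add: exp_add[symmetric])
    thus ?thesis unfolding eq by (simp only: mult_ac)
  qed
  also have "\<dots> \<le> (real d + 1) * (real d ^ d * exp(-real d)) * 1"
  proof (rule mult_left_mono)
    show "(1 + 1/real d)^d * exp (-1) \<le> 1" using b by (simp add: exp_minus field_simps)
  qed simp
  also have "\<dots> \<le> (real d + 1) * (2*exp(-2)*fact d)" using Suc.IH by simp
  also have "\<dots> = 2*exp(-2)*fact (Suc d)" by (simp add: algebra_simps)
  finally show ?case .
qed

lemma exp3: fixes a b c :: real shows "exp (a - b - c) = exp a * exp (-b) * exp (-c)"
  by (simp add: exp_diff exp_minus divide_inverse)

lemma exp_ln_pow: fixes u :: real assumes "u > 0" shows "exp (real k * ln u) = u^k"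
  using assms by (metis powr_def powr_realpow mult.commute less_irrefl)

lemma ln_le_quad: fixes z :: real assumes "0 < z" "z \<le> 1"
  shows "ln z \<le> (z-1) - (z-1)^2/2"
proof -
  let ?h = "\<lambda>y::real. y - 1 - (y-1)^2/2 - ln y"
  have "?h 1 \<le> ?h z"
  proof (rule deriv_nonpos_imp_antimono[where g = ?h and g' = "\<lambda>y. 1 - (y-1) - 1/y"])
    fix x assume x: "x \<in> {z..1}"
    hence "x > 0" using assms by auto
    thus "(?h has_real_derivative 1 - (x-1) - 1/x) (at x)"
      by (auto intro!: derivative_eq_intros simp: field_simps power2_eq_square)
  next
    fix x assume x: "x \<in> {z..1}"
    hence "x > 0" using assms by auto
    have "1 - (x-1) - 1/x = -((x-1)^2/x)" using \<open>x>0\<close> by (simp add: field_simps power2_eq_square)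
    also have "\<dots> \<le> 0" using \<open>x>0\<close> by simp
    finally show "1 - (x-1) - 1/x \<le> 0" .
  qed (use assms in auto)
  thus ?thesis by simp
qed



lemma p_near: fixes u :: real assumes "0 < u" "u \<le> real d"
  shows "u^d * exp(-u) \<le> (real d)^d * exp(-real d) * exp (- ((real d - u)^2 / (2 * real d)))"
proof -
  have dpos: "real d > 0" using assms by simp
  define z where "z = u / real d"
  have z: "0 < z" "z \<le> 1" using assms dpos by (auto simp: z_def)
  have lu: "ln u = ln (real d) + ln z" using assms dpos by (simp add: z_def ln_div)
  have "real d * ln u - u \<le> real d * ln (real d) - real d - (real d-u)^2/(2*real d)"
  proof -
    have "real d * ln z \<le> real d * ((z-1) - (z-1)^2/2)"
      using ln_le_quad[OF z] dpos by (simp add: mult_left_mono)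
    also have "\<dots> = (u - real d) - (real d - u)^2/(2*real d)"
      using dpos by (simp add: z_def field_simps power2_eq_square)
    finally show ?thesis using lu by (simp add: algebra_simps)
  qed
  hence "exp (real d * ln u - u) \<le> exp (real d * ln (real d) - real d - (real d-u)^2/(2*real d))"
    by simp
  moreover have "exp (real d * ln u - u) = u^d * exp(-u)"
    using assms exp_ln_pow[of u d] by (simp add: exp_diff exp_minus field_simps)
  moreover have "exp (real d * ln (real d) - real d - (real d-u)^2/(2*real d))
      = (real d)^d * exp(-real d) * exp (- ((real d - u)^2 / (2 * real d)))"
    using dpos exp_ln_pow[of "real d" d] by (simp only: exp3)
  ultimately show ?thesis by simp
qed

lemma p_max: fixes u :: real assumes "0 < u" "0 < d"
  shows "u^d * exp(-u) \<le> (real d)^d * exp(-real d)"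
proof -
  have dpos: "real d > 0" using assms by simp
  have "ln (u / real d) \<le> u/real d - 1" using assms dpos by (intro ln_le_minus_one) simp
  hence "real d * ln (u / real d) \<le> real d * (u/real d - 1)" using dpos by (simp add: mult_left_mono)
  moreover have "real d * (u / real d - 1) = u - real d" using dpos by (simp add: field_simps)
  moreover have "ln (u / real d) = ln u - ln (real d)" using assms dpos by (simp add: ln_div)
  ultimately have "real d * ln u - u \<le> real d * ln (real d) - real d"
    by (simp add: right_diff_distrib)
  hence "exp (real d * ln u - u) \<le> exp (real d * ln (real d) - real d)" by simp
  thus ?thesis using assms dpos exp_ln_pow[of u d] exp_ln_pow[of "real d" d]
    by (simp add: exp_diff exp_minus field_simps)
qed



lemma g_deriv:
  fixes D :: real
  shows "((\<lambda>u. u^(k+1)*exp(-u)*((u-D)^2+u)) has_real_derivative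
          exp(-u)*u^k*(-(u-D)*((u-D)^2-D) + (real k + 2 - D)*((u-D)^2+u))) (at u)"
proof -
  have "((\<lambda>u. u^(k+1)*exp(-u)*((u-D)^2+u)) has_real_derivative
     (real (k+1)*u^k*exp(-u)*((u-D)^2+u) + u^(k+1)*(-exp(-u))*((u-D)^2+u) + u^(k+1)*exp(-u)*(2*(u-D)+1))) (at u)"
    by (rule derivative_eq_intros refl | simp)+ (simp add: right_diff_distrib mult_ac)
  moreover have "real (k+1)*u^k*exp(-u)*((u-D)^2+u) + u^(k+1)*(-exp(-u))*((u-D)^2+u) + u^(k+1)*exp(-u)*(2*(u-D)+1)
     = exp(-u)*u^k*(-(u-D)*((u-D)^2-D) + (real k + 2 - D)*((u-D)^2+u))"
    by (simp only: power_Suc2 Suc_eq_plus1[symmetric] of_nat_Suc) algebra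
  ultimately show ?thesis by simp
qed

lemma f_bound:
  assumes "d \<ge> 2" "u > 0"
  shows "u^(d-1)*exp(-u)*((u - real d)^2+u) \<le> 3/4 * fact d"
proof -
  obtain k where dk: "d = k+2" using assms by (metis add.commute le_Suc_ex)
  define D where "D = real d"
  have D2: "D \<ge> 2" using assms by (simp add: D_def)
  define g where "g = (\<lambda>u. u^(k+1)*exp(-u)*((u-D)^2+u))"
  define g' where "g' = (\<lambda>u. exp(-u)*u^k*(-(u-D)*((u-D)^2-D)))"
  have der: "(g has_real_derivative g' x) (at x)" for x
    using g_deriv[of k D x] by (simp add: g_def g'_def D_def dk)
  have s2: "sqrt D \<ge> 1.4" using D2 by (intro real_le_rsqrt) (simp add: power2_eq_square)
  have sq: "sqrt D ^2 = D" using D2 by simp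
  define u0 where "u0 = D - sqrt D"
  define u1 where "u1 = D + sqrt D"
  have sD: "sqrt D < D"
  proof -
    have "sqrt D > 1" using D2 by simp
    hence "sqrt D < sqrt D * sqrt D" using mult_strict_left_mono[of 1 "sqrt D" "sqrt D"] by simp
    also have "\<dots> = D" using D2 by simp
    finally show ?thesis .
  qed
  have u0pos: "u0 > 0" using sD by (simp add: u0_def)
  have gpos: "g' x \<ge> 0" if "x \<ge> 0" "(x - D)^2 \<ge> D" "x \<le> D" for x
  proof -
    have "0 \<le> (D - x) * ((x-D)^2-D)" using that by simp
    thus ?thesis using that by (simp add: g'_def)
  qed
  have gpos2: "g' x \<ge> 0" if "x \<ge> 0" "(x - D)^2 \<le> D" "x \<ge> D" for x
  proof -
    have "0 \<le> (x - D) * (D - (x-D)^2)" using that by simp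
    hence "0 \<le> exp(-x)*x^k*((x - D) * (D - (x-D)^2))" using that by simp
    thus ?thesis by (simp add: g'_def algebra_simps)
  qed
  have gneg: "g' x \<le> 0" if "x \<ge> 0" "(x - D)^2 \<le> D" "x \<le> D" for x
  proof -
    have "0 \<le> (D - x) * (D - (x-D)^2)" using that by simp
    hence "0 \<le> exp(-x)*x^k*((D - x) * (D - (x-D)^2))" using that by simp
    thus ?thesis by (simp add: g'_def algebra_simps)
  qed
  have gneg2: "g' x \<le> 0" if "x \<ge> 0" "(x - D)^2 \<ge> D" "x \<ge> D" for x
  proof -
    have "0 \<le> (x - D) * ((x-D)^2 - D)" using that by simp
    hence "0 \<le> exp(-x)*x^k*((x - D) * ((x-D)^2 - D))" using that by simp
    thus ?thesis by (simp add: g'_def algebra_simps)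
  qed
  have big: "(x - D)^2 \<ge> D" if "sqrt D \<le> \<bar>x - D\<bar>" for x
  proof -
    have "sqrt D ^2 \<le> \<bar>x - D\<bar>^2" using that D2 by (intro power_mono) auto
    thus ?thesis using sq by simp
  qed
  have small: "(x - D)^2 \<le> D" if "\<bar>x - D\<bar> \<le> sqrt D" for x
  proof -
    have "\<bar>x - D\<bar>^2 \<le> sqrt D ^2" using that D2 by (intro power_mono) auto
    thus ?thesis using sq by simp
  qed
  have d_eq: "d - 1 = k + 1" using dk by simp
  have gd: "g x = x^d * exp(-x) * ((x-D)^2 + x) / x" if "x > 0" for x
    using that by (simp add: g_def dk)
  have E: "exp (-2) * exp(-1/2) \<le> (1/12::real)"
  proof -
    have "exp (-2) * exp(-1/2) = exp (-(5/2::real))" by (simp add: mult_exp_exp)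
    also have "\<dots> = 1 / exp(5/2)" by (simp add: exp_minus inverse_eq_divide)
    finally have "exp (-2) * exp(-1/2) = 1 / exp (5/2::real)" .
    thus ?thesis using e_bounds(1) by (simp add: divide_le_eq)
  qed
  have pdd: "D^d * exp(-D) \<le> 2*exp(-2)*fact d" using pd_le[OF assms(1)] by (simp add: D_def)
  have gu0: "g u0 \<le> 3/4 * fact d"
  proof -
    have "(u0 - D)^2 = D" using sq by (simp add: u0_def)
    hence "g u0 = (u0^d * exp(-u0)) * ((D + u0) / u0)" using gd[OF u0pos] by (simp add: add.commute)
    also have "\<dots> \<le> (D^d * exp(-D) * exp(-1/2)) * (9/2)"
    proof (rule mult_mono)
      have "u0^d * exp(-u0) \<le> D^d * exp(-D) * exp (- ((D - u0)^2 / (2 * D)))"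
        using p_near[of u0 d] u0pos by (simp add: D_def u0_def)
      also have "(D - u0)^2 / (2 * D) = 1/2" using sq D2 by (simp add: u0_def)
      finally show "u0^d * exp(-u0) \<le> D^d * exp(-D) * exp(-1/2)" by simp
      have "1.4 * sqrt D \<le> sqrt D * sqrt D" using s2 D2 by (intro mult_right_mono) auto
      hence "D + u0 \<le> 9/2 * u0" using D2 by (simp add: u0_def)
      thus "(D + u0) / u0 \<le> 9/2" using u0pos by (simp add: divide_le_eq)
    qed (use u0pos D2 in auto)
    also have "\<dots> \<le> (2*exp(-2)*fact d * exp(-1/2)) * (9/2)"
      using pdd by (intro mult_right_mono) (auto simp: mult_ac)
    also have "\<dots> = 9 * fact d * (exp(-2)*exp(-1/2))" by simp
    also have "\<dots> \<le> 9 * fact d * (1/12)" using E by (intro mult_left_mono) auto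
    finally show ?thesis by simp
  qed
  have u1pos: "u1 > 0" using D2 s2 by (simp add: u1_def)
  have gu1: "g u1 \<le> 3/4 * fact d"
  proof -
    have "g u1 = (u1^d * exp(-u1)) * ((D + u1) / u1)" using gd[OF u1pos] sq by (simp add: u1_def add.commute)
    also have "\<dots> \<le> (D^d * exp(-D)) * 2"
    proof (rule mult_mono)
      show "u1^d * exp(-u1) \<le> D^d * exp(-D)" using p_max[of u1 d] u1pos assms by (simp add: D_def)
      show "(D + u1) / u1 \<le> 2" using u1pos D2 s2 by (simp add: divide_le_eq u1_def)
    qed (use u1pos D2 in auto)
    also have "\<dots> \<le> 4 * exp(-2) * fact d" using pdd by (simp add: mult_ac)
    also have "\<dots> \<le> 4 * (1/7) * fact d"
      using e_bounds(2) by (intro mult_right_mono mult_left_mono) (auto simp: exp_minus inverse_eq_divide divide_le_eq)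
    finally show ?thesis using fact_ge_zero[of d, where 'a=real] by linarith
  qed
  have "g u \<le> 3/4 * fact d"
  proof (cases "u \<le> D")
    case True
    show ?thesis
    proof (cases "u \<le> u0")
      case True
      have "g u \<le> g u0"
      proof (rule deriv_nonneg_imp_mono[OF der _ True])
        fix x assume "x \<in> {u..u0}"
        hence x: "u \<le> x" "x \<le> u0" by auto
        have "sqrt D \<le> \<bar>x - D\<bar>" using x by (simp add: u0_def)
        moreover have "x \<le> D" using x(2) real_sqrt_ge_zero[of D] D2 unfolding u0_def by linarith
        ultimately show "g' x \<ge> 0" using x assms(2) by (intro gpos big) auto
      qed
      thus ?thesis using gu0 by linarith
    next
      case False
      have "g u \<le> g u0"
      proof (rule deriv_nonpos_imp_antimono[OF der])
        fix x assume "x \<in> {u0..u}"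
        hence x: "u0 \<le> x" "x \<le> u" by auto
        have "\<bar>x - D\<bar> \<le> sqrt D" using x \<open>u \<le> D\<close> by (simp add: u0_def)
        thus "g' x \<le> 0" using x u0pos \<open>u \<le> D\<close> by (intro gneg small) auto
      qed (use False in auto)
      thus ?thesis using gu0 by linarith
    qed
  next
    case False
    show ?thesis
    proof (cases "u \<le> u1")
      case True
      have "g u \<le> g u1"
      proof (rule deriv_nonneg_imp_mono[OF der _ True])
        fix x assume "x \<in> {u..u1}"
        hence x: "u \<le> x" "x \<le> u1" by auto
        have "\<bar>x - D\<bar> \<le> sqrt D" using x False by (simp add: u1_def)
        thus "g' x \<ge> 0" using x False D2 by (intro gpos2 small) auto
      qed
      thus ?thesis using gu1 by linarith
    next
      case F2: False
      have "g u \<le> g u1"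
      proof (rule deriv_nonpos_imp_antimono[OF der])
        fix x assume "x \<in> {u1..u}"
        hence x: "u1 \<le> x" "x \<le> u" by auto
        have "sqrt D \<le> \<bar>x - D\<bar>" using x by (simp add: u1_def)
        moreover have "x \<ge> D" using x(1) real_sqrt_ge_zero[of D] D2 unfolding u1_def by linarith
        ultimately show "g' x \<le> 0" using x u1pos by (intro gneg2 big) auto
      qed (use F2 in auto)
      thus ?thesis using gu1 by linarith
    qed
  qed
  thus ?thesis by (simp add: g_def D_def dk)
qed



lemma fact_le_fact_pow: "r \<le> n \<Longrightarrow> (fact n :: real) \<le> fact (n - r) * real n ^ r"
proof (induction r)
  case 0 then show ?case by simp
next
  case (Suc r)
  have "n - r = Suc (n - Suc r)" using Suc.prems by simp
  hence "(fact (n - r) :: real) = real (n - r) * fact (n - Suc r)" by (metis fact_Suc of_nat_Suc mult.commute)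
  also have "\<dots> \<le> real n * fact (n - Suc r)" by (intro mult_right_mono) auto
  finally have "(fact (n - r) :: real) \<le> real n * fact (n - Suc r)" .
  hence "fact (n - r) * real n ^ r \<le> real n * fact (n - Suc r) * real n ^ r"
    by (intro mult_right_mono) auto
  moreover have "fact n \<le> fact (n - r) * real n ^ r" using Suc by simp
  ultimately have "fact n \<le> real n * fact (n - Suc r) * real n ^ r" by linarith
  thus ?case by (simp add: mult_ac)
qed

lemma binom_le: "d \<le> n \<Longrightarrow> real (n choose d) \<le> real n ^ d / fact d"
proof -
  assume a: "d \<le> n"
  have "fact d * real (n choose d) = fact n / fact (n - d)" using fact_binomial[OF a] by simp
  also have "\<dots> \<le> real n ^ d" using fact_le_fact_pow[OF a] by (simp add: divide_le_eq mult.commute)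
  finally show ?thesis by (simp add: le_divide_eq mult.commute)
qed

lemma powi_neg: "(x::real) powi (- int d) = 1 / x^d"
  by (simp add: power_int_minus inverse_eq_divide)

lemma powi_neg2: "(x::real) powi (- 2 * int d) = 1 / x^(2*d)"
proof -
  have "(2 * int d) = int (2*d)" by simp
  hence "x powi (- 2 * int d) = x powi (- int (2*d))" by simp
  also have "\<dots> = 1 / x^(2*d)" by (rule powi_neg)
  finally show ?thesis .
qed

lemma powi_neg2': "(x::real) powi (- (2 * int d)) = 1 / x^(2*d)"
  using powi_neg2[of x d] by simp

definition TT :: "nat \<Rightarrow> nat \<Rightarrow> nat \<Rightarrow> real" where
  "TT d n m = real m * (real n / real m)^d * exp (-(real n / real m)) / fact d"

lemma TT_nonneg: "TT d n m \<ge> 0" by (simp add: TT_def)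

lemma one_minus_le_exp_pow:
  fixes a :: real assumes "0 \<le> 1 - a"
  shows "(1 - a)^k \<le> exp (- (real k * a))"
proof -
  have "(1 - a)^k \<le> exp (-a)^k" by (rule power_mono) (use assms exp_ge_add_one_self[of "-a"] in auto)
  also have "\<dots> = exp (- (real k * a))" by (simp add: exp_of_nat_mult[symmetric])
  finally show ?thesis .
qed

lemma mu_le:
  assumes "m \<ge> 2" "d \<le> n"
  shows "occ_mean d n m \<le> exp (real d / real m) * TT d n m"
proof -
  have mpos: "real m > 0" using assms by simp
  have "occ_mean d n m = (real m / real m ^ d) * real (n choose d) * (1 - 1/real m)^(n-d)"
    by (simp add: occ_mean_def powi_neg)
  also have "\<dots> \<le> (real m / real m ^ d) * (real n ^ d / fact d) * exp (- (real (n-d) * (1/real m)))"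
  proof (intro mult_mono mult_left_mono binom_le one_minus_le_exp_pow)
  qed (use assms mpos in auto)
  also have "exp (- (real (n-d) * (1/real m))) = exp (-(real n / real m)) * exp (real d / real m)"
    using assms by (simp add: of_nat_diff mult_exp_exp diff_divide_distrib)
  also have "(real m / real m ^ d) * (real n ^ d / fact d) * (exp (-(real n / real m)) * exp (real d / real m))
      = exp (real d / real m) * TT d n m"
    by (simp add: TT_def power_divide)
  finally show ?thesis .
qed

definition WW :: "nat \<Rightarrow> nat \<Rightarrow> nat \<Rightarrow> real" where
  "WW d n m = real m * (real m - 1) * (fact n / (fact d * fact d * fact (n - 2 * d)))
          * (real m) powi (- 2 * int d) * (1 - 2 / real m) ^ (n - 2 * d)"

lemma occ_var_eq: "occ_var d n m = occ_mean d n m + (if n < 2*d then 0 else WW d n m) - (occ_mean d n m)^2"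
  by (simp add: occ_var_def WW_def)

lemma W_le:
  assumes "m \<ge> 2" "2*d \<le> n"
  shows "WW d n m \<le> exp (4 * real d / real m) * (TT d n m)^2"
proof -
  have mpos: "real m > 0" using assms by simp
  have "WW d n m = (real m * (real m - 1) / real m^(2*d)) * ((fact n / fact (n - 2*d)) / (fact d)^2) * (1 - 2/real m)^(n - 2*d)"
    by (simp add: WW_def powi_neg2 powi_neg2' power2_eq_square)
  also have "\<dots> \<le> (real m^2 / real m^(2*d)) * (real n^(2*d) / (fact d)^2) * exp (- (real (n-2*d) * (2/real m)))"
  proof (rule mult_mono[OF mult_mono])
    show "(1 - 2/real m)^(n - 2*d) \<le> exp (- (real (n-2*d) * (2/real m)))"
      using assms by (intro one_minus_le_exp_pow) (simp add: field_simps)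
    show "(fact n / fact (n - 2*d)) / (fact d)^2 \<le> real n^(2*d) / (fact d)^2"
      using fact_le_fact_pow[of "2*d" n] assms by (intro divide_right_mono) (simp_all add: divide_le_eq mult.commute)
    show "real m * (real m - 1) / real m ^ (2 * d) \<le> real m^2 / real m ^ (2 * d)"
      using mpos by (intro divide_right_mono) (auto simp: power2_eq_square)
  qed (use assms mpos in auto)
  also have "exp (- (real (n-2*d) * (2/real m))) = exp (-(real n / real m))^2 * exp (4 * real d / real m)"
    using assms by (simp add: of_nat_diff mult_exp_exp power2_eq_square field_simps)
  also have "(real m^2 / real m^(2*d)) * (real n^(2*d) / (fact d)^2) * (exp (-(real n / real m))^2 * exp (4 * real d / real m))
      = exp (4 * real d / real m) * (TT d n m)^2"
    by (simp add: TT_def power_divide power_mult_distrib power_mult field_simps)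
  finally show ?thesis .
qed

lemma V_le:
  assumes "m \<ge> 2" "d \<le> n"
  shows "occ_var d n m \<le> exp (2 * real d) * (TT d n m + (TT d n m)^2)"
proof -
  have T0: "TT d n m \<ge> 0" by (rule TT_nonneg)
  have e1: "exp (real d / real m) \<le> exp (2 * real d)"
  proof -
    have "real d * 1 \<le> real d * (2 * real m)" using assms by (intro mult_left_mono) auto
    thus ?thesis using assms by (simp add: divide_le_eq mult_ac)
  qed
  have e2: "exp (4 * real d / real m) \<le> exp (2 * real d)"
  proof -
    have "4 * real d \<le> 2 * real d * real m" using assms by (simp add: mult_left_mono[of 2 "real m" "2 * real d", simplified])
    thus ?thesis using assms by (simp add: divide_le_eq)
  qed
  have mu: "occ_mean d n m \<le> exp (2 * real d) * TT d n m"
    using mu_le[OF assms] e1 T0 by (meson mult_right_mono order_trans)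
  show ?thesis
  proof (cases "n < 2*d")
    case True
    hence "occ_var d n m \<le> occ_mean d n m" by (simp add: occ_var_eq)
    also have "\<dots> \<le> exp (2 * real d) * (TT d n m + (TT d n m)^2)"
      using mu T0 by (smt (verit) exp_gt_zero mult_left_mono zero_le_power2)
    finally show ?thesis .
  next
    case False
    hence "occ_var d n m \<le> occ_mean d n m + WW d n m" by (simp add: occ_var_eq)
    moreover have "WW d n m \<le> exp (2 * real d) * (TT d n m)^2"
      using W_le[of m d n] False assms e2 by (meson mult_right_mono order_trans zero_le_power2 not_less)
    ultimately show ?thesis using mu by (simp add: distrib_left)
  qed
qed

lemma T_le_m: "TT d n m \<le> real m"
proof -
  have "(real n / real m)^d * exp (-(real n / real m)) \<le> fact d" by (rule pow_exp_le_fact) simp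
  hence "TT d n m = real m * ((real n / real m)^d * exp (-(real n / real m)) / fact d)"
    and "(real n / real m)^d * exp (-(real n / real m)) / fact d \<le> 1" by (simp_all add: TT_def)
  thus ?thesis by (metis mult_left_mono mult.right_neutral of_nat_0_le_iff)
qed

lemma T_le_n: assumes "d \<ge> 1" "m \<ge> 1" shows "TT d n m \<le> real n ^ d"
proof -
  have "TT d n m = (real n ^ d / real m ^ (d - 1)) * exp (-(real n / real m)) / fact d"
  proof -
    have "real m ^ d = real m * real m ^ (d - 1)" using assms by (metis power_eq_if not_one_le_zero)
    thus ?thesis using assms by (simp add: TT_def power_divide)
  qed
  also have "\<dots> \<le> (real n ^ d / 1) * 1 / 1"
  proof (intro divide_mono mult_mono)
    show "1 \<le> real m ^ (d - 1)" using assms by simp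
  qed (auto)
  finally show ?thesis by simp
qed

lemma T_le_b:
  fixes \<epsilon> :: real
  assumes "m \<ge> 2" "\<epsilon> > 0" "(1 + \<epsilon>) * ln (real m) < real n / real m"
  shows "TT d n m \<le> 1 / (\<epsilon> / (1 + \<epsilon>)) ^ d"
proof -
  define \<delta> where "\<delta> = \<epsilon> / (1 + \<epsilon>)"
  define l where "l = real n / real m"
  have dpos: "\<delta> > 0" using assms by (simp add: \<delta>_def)
  have l0: "l \<ge> 0" by (simp add: l_def)
  have h: "ln (real m) * (1 + \<epsilon>) < l" using assms(3) by (simp add: l_def mult.commute)
  have "ln (real m) < l / (1 + \<epsilon>)" using pos_less_divide_eq[of "1+\<epsilon>"] h assms(2) by simp
  hence "ln (real m) - l \<le> - (\<delta> * l)" using assms by (simp add: \<delta>_def field_simps)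
  hence "exp (ln (real m) - l) \<le> exp (- (\<delta> * l))" by simp
  hence me: "real m * exp (-l) \<le> exp (- (\<delta> * l))" using assms by (simp add: exp_diff exp_minus field_simps)
  have key: "(\<delta> * l)^d * exp (-(\<delta> * l)) \<le> fact d" using dpos l0 by (intro pow_exp_le_fact) simp
  have "TT d n m = (real m * exp (-l)) * l^d / fact d" by (simp add: TT_def l_def)
  also have "\<dots> \<le> exp (- (\<delta> * l)) * l^d / fact d"
    using me l0 by (intro divide_right_mono mult_right_mono) auto
  also have "\<dots> = ((\<delta> * l)^d * exp (-(\<delta> * l)) / fact d) / \<delta>^d"
    using dpos by (simp add: power_mult_distrib)
  also have "\<dots> \<le> 1 / \<delta>^d"
    using key dpos by (intro divide_right_mono) (simp_all add: divide_le_eq)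
  finally show ?thesis by (simp add: \<delta>_def)
qed



lemma rho_ind:
  assumes "2*d \<le> n" "j \<le> d"
  shows "(fact n::real) * fact (n-d-j) * (real n - 2*real d + 1)^j \<le> fact (n-d) * fact (n-j) * (real n - real d + 1)^j"
  using assms(2)
proof (induction j)
  case 0 then show ?case by simp
next
  case (Suc j)
  define a where "a = real n - 2*real d + 1"
  define b where "b = real n - real d + 1"
  have jd: "j < d" using Suc by simp
  have e1: "n - d - j = Suc (n - d - Suc j)" using assms jd by simp
  have e2: "n - j = Suc (n - Suc j)" using assms jd by simp
  define X where "X = (fact n::real) * fact (n - d - Suc j) * a^j"
  define Y where "Y = (fact (n-d)::real) * fact (n - Suc j) * b^j"
  have X0: "X \<ge> 0" using assms by (simp add: X_def a_def)
  have rnd: "real (n - d - j) = real n - real d - real j" using assms jd by (simp add: of_nat_diff)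
  have rnd': "real (n - (d + j)) = real n - real d - real j" using assms jd by (simp add: of_nat_diff)
  have rnj: "real (n - j) = real n - real j" using assms jd by (simp add: of_nat_diff)
  have IH: "X * (real n - real d - real j) \<le> Y * (real n - real j)"
  proof -
    have "(fact n::real) * fact (n-d-j) * a^j \<le> fact (n-d) * fact (n-j) * b^j"
      using Suc by (simp add: a_def b_def)
    moreover have "(fact (n-d-j)::real) = real (n-d-j) * fact (n - d - Suc j)"
      by (metis e1 fact_Suc)
    moreover have "(fact (n-j)::real) = real (n-j) * fact (n - Suc j)"
      by (metis e2 fact_Suc)
    ultimately show ?thesis by (simp add: X_def Y_def rnd rnd' rnj mult_ac)
  qed
  have key: "a * (real n - real j) \<le> (real n - real d - real j) * b"
  proof -
    have "(real n - real d - real j) * b - a * (real n - real j) = real d * (real d - 1 - real j)"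
      by (simp add: a_def b_def algebra_simps)
    moreover have "real d * (real d - 1 - real j) \<ge> 0" using jd by simp
    ultimately show ?thesis by linarith
  qed
  have pos: "real n - real j > 0" using assms jd by simp
  have "(X * a) * (real n - real j) \<le> X * ((real n - real d - real j) * b)"
    using mult_left_mono[OF key X0] by (simp add: mult_ac)
  also have "\<dots> = (X * (real n - real d - real j)) * b" by (simp add: mult_ac)
  also have "\<dots> \<le> (Y * (real n - real j)) * b"
    using IH assms by (intro mult_right_mono) (auto simp: b_def)
  finally have "(X * a) * (real n - real j) \<le> (Y * b) * (real n - real j)" by (simp add: mult_ac)
  hence "X * a \<le> Y * b" using pos by simp
  thus ?case by (simp add: X_def Y_def a_def b_def mult_ac)
qed

lemma rho_ge:
  assumes "2*d \<le> n"
  shows "((real n - 2*real d + 1) / (real n - real d + 1))^d \<le> (fact (n-d))^2 / (fact n * fact (n - 2*d))"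
proof -
  have "(fact n::real) * fact (n-d-d) * (real n - 2*real d + 1)^d \<le> fact (n-d) * fact (n-d) * (real n - real d + 1)^d"
    using rho_ind[OF assms, of d] by simp
  moreover have "n - d - d = n - 2*d" by simp
  moreover have "real n - real d + 1 > 0" using assms by simp
  ultimately show ?thesis
    by (simp add: power_divide divide_le_eq le_divide_eq power2_eq_square mult_ac)
qed

lemma W_eq:
  assumes "m \<ge> 3" "2*d \<le> n" "d \<ge> 1"
  shows "WW d n m = (occ_mean d n m)^2 * ((real m/(real m - 1))^(2*d-1) * ((fact (n-d))^2/(fact n * fact(n-2*d)))
            * (1 - 1/(real m - 1)^2)^(n-2*d))"
proof -
  obtain K where nK: "n = K + 2*d" using assms by (metis add.commute le_Suc_ex)
  have m3: "real m \<ge> 3" using assms by simp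
  define x where "x = 1 - 1/real m"
  define Q where "Q = (real m/(real m - 1))^(2*d-1)"
  define Cb where "Cb = (fact n::real) / (fact d * fact (K+d))"
  define \<rho> where "\<rho> = (fact (K+d))^2/((fact n::real) * fact K)"
  define Cc where "Cc = (1 - 1/(real m - 1)^2)^K"
  have nd: "n - d = K + d" "n - 2*d = K" using nK by auto
  have mu_eq: "occ_mean d n m = real m * Cb * (1/real m^d) * x^(K+d)"
    using assms by (simp add: occ_mean_def Cb_def powi_neg binomial_fact nd x_def)
  have h1: "(x^(K+d))^2 * Q = x^(2*K) * x"
  proof -
    have e: "(K+d)*2 = Suc (2*K) + (2*d-1)" using assms by simp
    have "(x^(K+d))^2 = x^((K+d)*2)" by (simp only: power_mult)
    also have "\<dots> = x^(Suc (2*K) + (2*d-1))" by (simp only: e)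
    also have "\<dots> = x^(2*K) * x * x^(2*d-1)" by (simp only: power_add power_Suc2)
    finally have "(x^(K+d))^2 = x^(2*K) * x * x^(2*d-1)" .
    moreover have "x^(2*d-1) * Q = 1"
    proof -
      have "x * (real m/(real m - 1)) = 1" using m3 by (simp add: x_def field_simps)
      hence "(x * (real m/(real m - 1)))^(2*d-1) = 1" by (simp only: power_one)
      thus ?thesis unfolding Q_def by (simp only: power_mult_distrib)
    qed
    ultimately show ?thesis by (metis mult.assoc mult.right_neutral)
  qed
  have h2: "x^(2*K) * Cc = (1 - 2/real m)^K"
  proof -
    have "(real m - 1)^2 > 0" using m3 by simp
    hence nz: "1 + real m * real m \<noteq> real m * 2" by (simp add: power2_eq_square algebra_simps)
    have a: "x = (real m - 1)/real m" using m3 by (simp add: x_def field_simps)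
    have b: "1 - 1/(real m - 1)^2 = ((real m - 1)^2 - 1)/(real m - 1)^2"
      using \<open>(real m - 1)^2 > 0\<close> by (simp add: field_simps)
    have "x^2 * (1 - 1/(real m - 1)^2) = ((real m - 1)^2 - 1) / real m^2"
      unfolding a b using \<open>(real m - 1)^2 > 0\<close> by (simp add: power_divide)
    also have "\<dots> = 1 - 2/real m" using m3 by (simp add: field_simps power2_eq_square)
    finally have "x^2 * (1 - 1/(real m - 1)^2) = 1 - 2/real m" .
    thus ?thesis by (simp add: Cc_def power_mult power_mult_distrib[symmetric])
  qed
  have h3: "real m^2 * x = real m * (real m - 1)" using m3 by (simp add: x_def field_simps power2_eq_square)
  have h4: "Cb^2 * \<rho> = fact n / (fact d * fact d * fact K)"
    by (simp add: Cb_def \<rho>_def power2_eq_square field_simps)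
  have h5: "(1/real m^d)^2 = 1/real m^(2*d)" by (simp add: power_mult[symmetric] power_divide mult.commute)
  have "(occ_mean d n m)^2 * (Q * \<rho> * Cc) = (real m*Cb*(1/real m^d))^2 * ((x^(K+d))^2 * Q) * \<rho> * Cc"
    unfolding mu_eq by (simp only: power_mult_distrib mult_ac)
  also have "\<dots> = (real m*Cb*(1/real m^d))^2 * (x^(2*K) * x) * \<rho> * Cc" by (simp add: h1)
  also have "\<dots> = (real m^2*x) * (Cb^2*\<rho>) * (1/real m^d)^2 * (x^(2*K)*Cc)"
    by (simp only: power_mult_distrib mult_ac)
  also have "\<dots> = real m * (real m - 1) * (fact n / (fact d * fact d * fact K)) * (1/real m^(2*d)) * (1 - 2/real m)^K"
    by (simp only: h2 h3 h4 h5)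
  also have "\<dots> = WW d n m" by (simp add: WW_def powi_neg2 powi_neg2' nd)
  finally show ?thesis by (simp add: Q_def \<rho>_def Cc_def nd)
qed



lemma TBd_eq:
  fixes l m d P Ex fd N :: real
  assumes "l > 0" "m > 2" "N > 0" "fd > 0" "l*m = N + 2*d - 1"
  shows "m * (l*P) * Ex / fd * (-(2*d-1)/m + d^2/N + (l*m)/(m*(m-2)))
       = P*Ex*((l-d)^2+l)/fd + (P*Ex) * (d^2*(2*d-1)/(fd*N)) + (l*l*P*Ex) * (2/(fd*(m-2)))"
proof -
  have s1: "l*(l*m/(m-2)) = l^2 + 2*l^2/(m-2)" using assms by (simp add: field_simps power2_eq_square)
  have s2: "l*(d^2*m/N) = d^2 + d^2*(2*d-1)/N"
  proof -
    have "l*(d^2*m/N) = d^2*(l*m)/N" by simp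
    also have "\<dots> = d^2*(N + (2*d-1))/N" using assms by simp
    also have "\<dots> = d^2 + d^2*(2*d-1)/N" using assms by (simp add: field_simps)
    finally show ?thesis .
  qed
  have "m * (l*P) * Ex / fd * (-(2*d-1)/m + d^2/N + (l*m)/(m*(m-2)))
      = (P*Ex/fd) * (l * (-(2*d-1) + d^2*m/N + l*m/(m-2)))"
    using assms by (simp add: field_simps)
  also have "l * (-(2*d-1) + d^2*m/N + l*m/(m-2)) = -(2*d-1)*l + l*(d^2*m/N) + l*(l*m/(m-2))"
    by (simp add: algebra_simps)
  also have "\<dots> = ((l-d)^2+l) + d^2*(2*d-1)/N + 2*l^2/(m-2)"
    unfolding s1 s2 by (simp add: power2_eq_square algebra_simps)
  also have "(P*Ex/fd) * (((l-d)^2+l) + d^2*(2*d-1)/N + 2*l^2/(m-2))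
      = P*Ex*((l-d)^2+l)/fd + (P*Ex) * (d^2*(2*d-1)/(fd*N)) + (l*l*P*Ex) * (2/(fd*(m-2)))"
    using assms by (simp add: field_simps power2_eq_square)
  finally show ?thesis .
qed

lemma TBd_le:
  assumes "d \<ge> 2" "real n \<ge> 100*real d^2 + 2*real d" "real m \<ge> 100*real d + 102"
  shows "TT d n m * (-(2*real d-1)/real m + real d^2/(real n - 2*real d + 1) + real n/(real m*(real m-2))) \<le> 79/100"
proof -
  define l where "l = real n / real m"
  define P where "P = l^(d-1)"
  define Ex where "Ex = exp (-l)"
  define fd where "fd = (fact d :: real)"
  define N where "N = real n - 2*real d + 1"
  have mpos: "real m > 2" using assms by simp
  have d2: "real d \<ge> 2" using assms by simp
  have dsq: "real d^2 \<ge> 0" by simp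
  have npos: "real n > 0" using assms d2 dsq by linarith
  have lpos: "l > 0" using mpos npos by (simp add: l_def)
  have Npos: "N > 0" using assms d2 dsq unfolding N_def by linarith
  have fdpos: "fd > 0" by (simp add: fd_def)
  have nl: "real n = l * real m" using mpos by (simp add: l_def)
  have ld: "l^d = l * P" using assms by (simp add: P_def power_eq_if)
  have TT_eq: "TT d n m = real m * (l*P) * Ex / fd" by (simp add: TT_def l_def[symmetric] ld Ex_def fd_def)
  have eq: "TT d n m * (-(2*real d-1)/real m + real d^2/(real n - 2*real d + 1) + real n/(real m*(real m-2)))
     = P*Ex*((l-real d)^2+l)/fd + (P*Ex) * (real d^2*(2*real d-1)/(fd*N)) + (l*l*P*Ex) * (2/(fd*(real m-2)))"
    unfolding TT_eq N_def[symmetric] unfolding nl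
    by (rule TBd_eq) (use lpos mpos Npos fdpos in \<open>auto simp: N_def nl\<close>)
  have t1: "P*Ex*((l-real d)^2+l)/fd \<le> 3/4"
    using f_bound[OF assms(1) lpos] fdpos by (simp add: P_def Ex_def fd_def divide_le_eq)
  have fd_eq: "fd = real d * fact (d-1)" using assms by (simp add: fd_def fact_num_eq_if)
  have t2: "(P*Ex) * (real d^2*(2*real d-1)/(fd*N)) \<le> 1/50"
  proof -
    have PE: "P*Ex \<le> fact (d-1)" using lpos by (simp add: P_def Ex_def pow_exp_le_fact)
    have c0: "real d^2*(2*real d-1)/(fd*N) \<ge> 0" using assms fdpos Npos by simp
    have "(P*Ex) * (real d^2*(2*real d-1)/(fd*N)) \<le> fact (d-1) * (real d^2*(2*real d-1)/(fd*N))"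
      by (rule mult_right_mono[OF PE c0])
    also have "\<dots> = real d*(2*real d-1)/N" using assms Npos by (simp add: fd_eq power2_eq_square field_simps)
    also have "\<dots> \<le> 1/50"
    proof -
      have "50 * (real d*(2*real d-1)) \<le> N" using assms by (simp add: N_def power2_eq_square algebra_simps)
      thus ?thesis using Npos by (simp add: divide_le_eq)
    qed
    finally show ?thesis .
  qed
  have t3: "(l*l*P*Ex) * (2/(fd*(real m-2))) \<le> 1/50"
  proof -
    have "l*l*P*Ex = l^(d+1) * exp(-l)" by (simp add: ld Ex_def)
    also have "\<dots> \<le> fact (d+1)" using lpos by (intro pow_exp_le_fact) simp
    also have "\<dots> = (real d + 1) * fd" by (simp add: fd_def)
    finally have a: "l*l*P*Ex \<le> (real d + 1) * fd" .
    have "(l*l*P*Ex) * (2/(fd*(real m-2))) \<le> ((real d + 1) * fd) * (2/(fd*(real m-2)))"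
      by (rule mult_right_mono[OF a]) (use mpos fdpos in simp)
    also have "\<dots> = 2*(real d + 1)/(real m - 2)" using fdpos by simp
    also have "\<dots> \<le> 1/50"
    proof -
      have "50 * (2*(real d + 1)) \<le> real m - 2" using assms by simp
      thus ?thesis using mpos by (simp add: divide_le_eq)
    qed
    finally show ?thesis .
  qed
  show ?thesis unfolding eq using t1 t2 t3 by linarith
qed



lemma ln_ge_one_minus_inv: fixes y :: real assumes "y > 0" shows "ln y \<ge> 1 - 1/y"
proof -
  have "ln (1/y) \<le> 1/y - 1" using assms by (intro ln_le_minus_one) simp
  thus ?thesis using assms by (simp add: ln_div)
qed

lemma part_c:
  assumes "d \<ge> 2" "real n \<ge> 100*real d^2 + 2*real d" "real m \<ge> 100*real d + 102"
  shows "occ_mean d n m \<le> 5 * occ_var d n m"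
proof -
  have d2: "real d \<ge> 2" using assms by simp
  have dsq: "real d^2 \<ge> 0" by simp
  have n2d_r: "real n \<ge> 2 * real d" using assms d2 dsq by linarith
  have n2d: "2*d \<le> n" using n2d_r by linarith
  have m3: "m \<ge> 3" using assms d2 by linarith
  have mr: "real m \<ge> 3" using m3 by simp
  define \<mu> where "\<mu> = occ_mean d n m"
  define Q where "Q = (real m/(real m - 1))^(2*d-1)"
  define \<rho> where "\<rho> = (fact (n-d))^2/((fact n::real) * fact(n-2*d))"
  define Cc where "Cc = (1 - 1/(real m - 1)^2)^(n-2*d)"
  define R where "R = Q * \<rho> * Cc"
  define Bd where "Bd = -(2*real d-1)/real m + real d^2/(real n - 2*real d + 1) + real n/(real m*(real m-2))"
  have WR: "WW d n m = \<mu>^2 * R" using W_eq[OF m3 n2d] assms by (simp add: \<mu>_def R_def Q_def \<rho>_def Cc_def)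
  have V: "occ_var d n m = \<mu> - \<mu>^2 * (1 - R)"
    using n2d by (simp add: occ_var_eq WR \<mu>_def algebra_simps)
  have mu0: "\<mu> \<ge> 0"
  proof -
    have "(1 - 1 / real m) \<ge> 0" using mr by simp
    hence "(1 - 1 / real m) ^ (n - d) \<ge> 0" by simp
    thus ?thesis by (simp add: \<mu>_def occ_mean_def powi_neg)
  qed
  have Qpos: "Q > 0" using mr by (simp add: Q_def)
  have \<rho>pos: "\<rho> > 0" by (simp add: \<rho>_def)
  have s_lt: "1/(real m - 1)^2 < 1"
  proof -
    have "(2::real)^2 \<le> (real m - 1)^2" by (rule power_mono) (use mr in auto)
    hence "(real m - 1)^2 > 1" by simp
    thus ?thesis by (simp add: divide_less_eq)
  qed
  have Ccpos: "Cc > 0" using s_lt by (simp add: Cc_def)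
  have Rpos: "R > 0" using Qpos \<rho>pos Ccpos by (simp add: R_def)
  have lnR: "ln R = ln Q + ln \<rho> + ln Cc" using Qpos \<rho>pos Ccpos by (simp add: R_def ln_mult)
  have lnQ: "ln Q \<ge> (2*real d - 1)/real m"
  proof -
    have "ln Q = real (2*d-1) * ln (real m/(real m - 1))" using mr by (simp add: Q_def ln_realpow)
    moreover have "ln (real m/(real m - 1)) \<ge> 1/real m"
      using ln_ge_one_minus_inv[of "real m/(real m - 1)"] mr by (simp add: field_simps)
    moreover have "real (2*d-1) = 2*real d - 1" using assms by (simp add: of_nat_diff)
    moreover have "2*real d - 1 \<ge> 0" using d2 by simp
    ultimately show ?thesis by (metis (no_types, opaque_lifting) mult_left_mono times_divide_eq_right mult.right_neutral)
  qed
  have ln\<rho>: "ln \<rho> \<ge> - (real d^2/(real n - 2*real d + 1))"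
  proof -
    define y where "y = (real n - 2*real d + 1) / (real n - real d + 1)"
    have ypos: "y > 0" using n2d_r by (simp add: y_def)
    have "y^d \<le> \<rho>" using rho_ge[OF n2d] by (simp add: y_def \<rho>_def)
    hence "ln (y^d) \<le> ln \<rho>" using ypos \<rho>pos by (subst ln_le_cancel_iff) auto
    hence a: "real d * ln y \<le> ln \<rho>" using ypos by (simp add: ln_realpow)
    have "ln y \<ge> 1 - 1/y" by (rule ln_ge_one_minus_inv[OF ypos])
    also have "1 - 1/y = - (real d/(real n - 2*real d + 1))" using n2d_r by (simp add: y_def field_simps)
    finally have h: "- (real d/(real n - 2*real d + 1)) \<le> ln y" .
    have "real d * (- (real d/(real n - 2*real d + 1))) \<le> real d * ln y" by (rule mult_left_mono[OF h]) simp
    thus ?thesis using a by (simp add: power2_eq_square)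
  qed
  have lnCc: "ln Cc \<ge> - (real n/(real m*(real m-2)))"
  proof -
    define s where "s = 1/(real m - 1)^2"
    have "(real m - 1)^2 > 0" using mr by simp
    hence nz: "1 + real m * real m \<noteq> real m * 2" by (simp add: power2_eq_square algebra_simps)
    have "ln (1 - s) \<ge> 1 - 1/(1-s)" using s_lt by (intro ln_ge_one_minus_inv) (simp add: s_def)
    also have "1 - 1/(1-s) = - (1/(real m*(real m-2)))"
      using mr nz by (simp add: s_def field_simps power2_eq_square)
    finally have a: "ln (1 - s) \<ge> - (1/(real m*(real m-2)))" .
    have "ln Cc = real (n-2*d) * ln (1 - s)" using s_lt by (simp add: Cc_def s_def ln_realpow)
    also have "\<dots> \<ge> real (n-2*d) * (- (1/(real m*(real m-2))))" by (rule mult_left_mono[OF a]) simp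
    also have "real (n-2*d) * (- (1/(real m*(real m-2)))) \<ge> real n * (- (1/(real m*(real m-2))))"
    proof -
      have "real (n-2*d) \<le> real n" by simp
      moreover have "1/(real m*(real m-2)) \<ge> 0" using mr by simp
      ultimately have "real (n-2*d) * (1/(real m*(real m-2))) \<le> real n * (1/(real m*(real m-2)))"
        by (rule mult_right_mono)
      thus ?thesis by linarith
    qed
    finally show ?thesis by simp
  qed
  have oneR: "1 - R \<le> Bd"
  proof -
    have "ln R \<le> R - 1" using Rpos by (rule ln_le_minus_one)
    moreover have "- Bd = (2*real d-1)/real m - real d^2/(real n - 2*real d + 1) - real n/(real m*(real m-2))"
      unfolding Bd_def by (simp add: diff_divide_distrib)
    moreover have "ln R \<ge> - Bd" using lnR lnQ ln\<rho> lnCc calculation(2) by linarith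
    ultimately show ?thesis by linarith
  qed
  have muBd: "\<mu> * Bd \<le> 4/5"
  proof (cases "Bd \<le> 0")
    case True
    have "\<mu> * Bd \<le> 0" using True mu0 by (simp add: mult_nonneg_nonpos)
    thus ?thesis by simp
  next
    case False
    have e: "exp (real d / real m) \<le> 10101/10000"
    proof -
      have q: "real d / real m \<le> 1/100" using assms mr by (simp add: divide_le_eq)
      have "exp (real d / real m) \<le> 1 + real d / real m + (real d / real m)^2"
      proof (rule exp_bound)
        show "0 \<le> real d / real m" by simp
        show "real d / real m \<le> 1" using q by linarith
      qed
      also have "(real d / real m)^2 \<le> (1/100)^2" by (rule power_mono[OF q]) simp
      finally show ?thesis using q unfolding power2_eq_square by linarith
    qed
    have "\<mu> * Bd \<le> (exp (real d / real m) * TT d n m) * Bd"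
      using mu_le[of m d n] m3 n2d False by (intro mult_right_mono) (auto simp: \<mu>_def)
    also have "\<dots> = exp (real d / real m) * (TT d n m * Bd)" by simp
    also have "\<dots> \<le> (10101/10000) * (79/100)"
      using e TBd_le[OF assms] TT_nonneg False
      by (intro mult_mono) (auto simp: Bd_def)
    also have "\<dots> \<le> 4/5" by simp
    finally show ?thesis .
  qed
  have "\<mu>^2 * (1 - R) \<le> \<mu> * (\<mu> * Bd)"
  proof -
    have "(\<mu>*\<mu>)*(1-R) \<le> (\<mu>*\<mu>)*Bd" by (rule mult_left_mono[OF oneR]) simp
    thus ?thesis by (simp add: power2_eq_square mult_ac)
  qed
  also have "\<dots> \<le> \<mu> * (4/5)" using muBd mu0 by (intro mult_left_mono) auto
  finally have "\<mu>^2 * (1 - R) \<le> \<mu> * (4/5)" .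
  thus ?thesis using V by (simp add: \<mu>_def)
qed



theorem lemma3p1:
  fixes d :: nat and nstar mstar \<epsilon> :: real
  assumes "d \<ge> 2" and "\<epsilon> > 0"
  shows "\<exists>r1 > 0. \<exists>C > 0. \<forall>n m :: nat. n \<ge> d \<longrightarrow> m \<ge> 2 \<longrightarrow> occ_var d n m \<ge> r1 \<longrightarrow>
           (real n > nstar \<and> real m > mstar)
         \<and> real n / real m \<le> (1 + \<epsilon>) * ln (real m)
         \<and> occ_mean d n m \<le> C * occ_var d n m"
proof -
  define \<delta> where "\<delta> = \<epsilon>/(1+\<epsilon>)"
  define Mth where "Mth = max mstar (100*real d + 102)"
  define Nth where "Nth = max nstar (100*real d^2 + 2*real d)"
  define Tmax where "Tmax = max Mth (max (Nth^d) (1/\<delta>^d))"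
  define E where "E = exp (2*real d)"
  define r1 where "r1 = E*(Tmax + Tmax^2) + 1"
  have Mth0: "Mth \<ge> 100*real d + 102" by (simp add: Mth_def)
  have Nth0: "Nth \<ge> 100*real d^2 + 2*real d" by (simp add: Nth_def)
  have Nthpos: "Nth \<ge> 0" using Nth0 by (smt (verit) of_nat_0_le_iff zero_le_power2)
  have Tmax0: "Tmax \<ge> 0" using Mth0 by (simp add: Tmax_def le_max_iff_disj)
  have TM: "Mth \<le> Tmax" "Nth^d \<le> Tmax" "1/\<delta>^d \<le> Tmax" by (simp_all add: Tmax_def)
  have E0: "E > 0" by (simp add: E_def)
  have "E * (Tmax + Tmax^2) \<ge> 0" using E0 Tmax0 by simp
  hence r1pos: "r1 > 0" by (simp add: r1_def)
  have main: "(real n > nstar \<and> real m > mstar)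
         \<and> real n / real m \<le> (1 + \<epsilon>) * ln (real m)
         \<and> occ_mean d n m \<le> 5 * occ_var d n m"
    if nd: "n \<ge> d" and m2: "m \<ge> 2" and V: "occ_var d n m \<ge> r1" for n m :: nat
  proof -
    have T0: "TT d n m \<ge> 0" by (rule TT_nonneg)
    have Tbig: "TT d n m > Tmax"
    proof (rule ccontr)
      assume "\<not> TT d n m > Tmax"
      hence le: "TT d n m \<le> Tmax" by simp
      have "(TT d n m)^2 \<le> Tmax^2" using le T0 by (intro power_mono) auto
      hence "E * (TT d n m + (TT d n m)^2) \<le> E * (Tmax + Tmax^2)" using le E0 by (intro mult_left_mono) auto
      moreover have "occ_var d n m \<le> E * (TT d n m + (TT d n m)^2)" using V_le[OF m2 nd] by (simp add: E_def)
      ultimately show False using V by (simp add: r1_def)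
    qed
    have mbig: "real m > Mth"
    proof (rule ccontr)
      assume "\<not> real m > Mth"
      thus False using T_le_m[of d n m] TM Tbig by linarith
    qed
    have nbig: "real n > Nth"
    proof (rule ccontr)
      assume "\<not> real n > Nth"
      hence "real n ^ d \<le> Nth ^ d" by (intro power_mono) auto
      thus False using T_le_n[of d m n] assms m2 TM Tbig by linarith
    qed
    have A1: "real n > nstar" using nbig by (simp add: Nth_def)
    have A2: "real m > mstar" using mbig by (simp add: Mth_def)
    have B: "real n / real m \<le> (1 + \<epsilon>) * ln (real m)"
    proof (rule ccontr)
      assume "\<not> real n / real m \<le> (1 + \<epsilon>) * ln (real m)"
      hence "(1 + \<epsilon>) * ln (real m) < real n / real m" by simp
      from T_le_b[OF m2 assms(2) this, of d] show False using TM Tbig by (simp add: \<delta>_def)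
    qed
    have "occ_mean d n m \<le> 5 * occ_var d n m"
      by (rule part_c[OF assms(1)]) (use nbig Nth0 mbig Mth0 in auto)
    thus ?thesis using A1 A2 B by blast
  qed
  show ?thesis
    apply (rule exI[of _ r1], rule conjI[OF r1pos])
    apply (rule exI[of _ 5])
    using main by simp
qed

end
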